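(* For each of the sets $\{000,001,010,100\}$, $\{000,001,010,100,111\}$ and $\{000,001,010,111\}$, and for every set obtained from any of them by any sequence of coordinate negations and coordinate permutations, $\rho(\mathcal S)=\log_2 6$.
   Context: Binary triples $(x_1,x_2,x_3)\in\{0,1\}^3$ are written $x_1x_2x_3$. Let $\mathcal S\subseteq\{0,1\}^3$ be nonempty. A distribution scheme with domain $\mathcal S$ is a pair $(P_R,\psi)$ where $P_R$ is a probability distribution on a finite set $\mathcal R$ and $\psi:\mathcal S\times\mathcal R\to\mathcal W_{12}\times\mathcal W_{23}\times\mathcal W_{31}$ for finite share alphabets. Given $\mathbf x=(x_1,x_2,x_3)\in\mathcal S$, the shares are $(W_{12},W_{23},W_{31})=\psi(\mathbf x,R)$, $R\sim P_R$. Party $P_1$ sees $V_1=(W_{12},W_{31})$, $P_2$ sees $V_2=(W_{23},W_{12})$, $P_3$ sees $V_3=(W_{31},W_{23})$. It is a 3SS scheme if (Correctness) for each $i$ there is a function $\phi_i$ with $\Pr[\phi_i(V_i)=x_i]=1$ for every $\mathbf x\in\mathcal S$, and (Perfect privacy) for each $i$ and all $\mathbf x,\mathbf x'\in\mathcal S$ with $x_i=x'_i$, $V_i$ has the same distribution under secret $\mathbf x$ as under $\mathbf x'$. The randomness complexity $\rho(\mathcal S)$ is the minimum of $\log_2|\mathcal R|$ over all 3SS schemes with domain $\mathcal S$. A coordinate negation maps $\mathcal S$ to $\{\mathbf x\oplus e_i:\mathbf x\in\mathcal S\}$; a coordinate permutation permutes the three coordinates of every element. *)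

theory Defs
  imports "HOL-Probability.Probability_Mass_Function"
begin

text \<open>Binary triples x1x2x3 are modelled as bool \<times> bool \<times> bool;
  coordinates are indexed 0,1,2 (corresponding to the paper's 1,2,3).\<close>

type_synonym triple = "bool \<times> bool \<times> bool"

definition tri :: "bool \<Rightarrow> bool \<Rightarrow> bool \<Rightarrow> triple" where
  "tri a b c = (a, b, c)"

definition coord :: "triple \<Rightarrow> nat \<Rightarrow> bool" where
  "coord x i = (if i = 0 then fst x else if i = 1 then fst (snd x) else snd (snd x))"

definition flip :: "nat \<Rightarrow> triple \<Rightarrow> triple" where
  "flip i x = tri (if i = 0 then \<not> coord x 0 else coord x 0)
                  (if i = 1 then \<not> coord x 1 else coord x 1)
                  (if i = 2 then \<not> coord x 2 else coord x 2)"

definition permute :: "(nat \<Rightarrow> nat) \<Rightarrow> triple \<Rightarrow> triple" where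
  "permute \<sigma> x = tri (coord x (\<sigma> 0)) (coord x (\<sigma> 1)) (coord x (\<sigma> 2))"

inductive coord_equiv :: "triple set \<Rightarrow> triple set \<Rightarrow> bool" where
  refl: "coord_equiv S S"
| neg: "coord_equiv S T \<Longrightarrow> i < 3 \<Longrightarrow> coord_equiv S (flip i ` T)"
| perm: "coord_equiv S T \<Longrightarrow> bij_betw \<sigma> {0,1,2} {0,1,2} \<Longrightarrow> coord_equiv S (permute \<sigma> ` T)"

text \<open>Shares (W12, W23, W31), share alphabets encoded in nat (finite images).
  Views: P1 sees (W12,W31), P2 sees (W23,W12), P3 sees (W31,W23).\<close>
definition view :: "nat \<Rightarrow> nat \<times> nat \<times> nat \<Rightarrow> nat \<times> nat" where
  "view i w = (case w of (w12, w23, w31) \<Rightarrow>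
      (if i = 0 then (w12, w31) else if i = 1 then (w23, w12) else (w31, w23)))"

text \<open>A 3SS scheme with domain S whose randomness set is R = {..<n},
  with distribution P on R and share function psi.\<close>
definition is_3SS :: "triple set \<Rightarrow> nat \<Rightarrow> nat pmf \<Rightarrow> (triple \<Rightarrow> nat \<Rightarrow> nat \<times> nat \<times> nat) \<Rightarrow> bool" where
  "is_3SS S n P psi \<longleftrightarrow>
     set_pmf P \<subseteq> {..<n} \<and>
     (\<forall>i<3. \<exists>phi. \<forall>x\<in>S. \<forall>r\<in>set_pmf P. phi (view i (psi x r)) = coord x i) \<and>
     (\<forall>i<3. \<forall>x\<in>S. \<forall>x'\<in>S. coord x i = coord x' i \<longrightarrow>
        map_pmf (\<lambda>r. view i (psi x r)) P = map_pmf (\<lambda>r. view i (psi x' r)) P)"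

definition rho :: "triple set \<Rightarrow> real" where
  "rho S = log 2 (real (LEAST n. \<exists>P psi. is_3SS S n P psi))"

end

theory Submission
  imports Defs
begin


lemma coord_tri[simp]: "coord (tri a b c) 0 = a" "coord (tri a b c) 1 = b" "coord (tri a b c) 2 = c"
  by (simp_all add: coord_def tri_def)

lemma view_simps[simp]: "view 0 (a,b,c) = (a,c)" "view 1 (a,b,c) = (b,a)" "view 2 (a,b,c) = (c,b)"
  by (simp_all add: view_def)

lemma view_Suc0[simp]: "view (Suc 0) (a,b,c) = (b,a)" by (simp add: view_def)
lemma coord_Suc0[simp]: "coord (tri a b c) (Suc 0) = b" by (simp add: coord_def tri_def)

lemma perm_map:
  assumes "bij_betw h A A" "finite A" "A \<noteq> {}" "\<forall>r\<in>A. f r = g (h r)"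
  shows "map_pmf f (pmf_of_set A) = map_pmf g (pmf_of_set A)"
proof -
  have "map_pmf f (pmf_of_set A) = map_pmf (g \<circ> h) (pmf_of_set A)"
    using assms(2,3,4) by (intro map_pmf_cong) auto
  also have "\<dots> = map_pmf g (map_pmf h (pmf_of_set A))" by (simp add: pmf.map_comp)
  also have "map_pmf h (pmf_of_set A) = pmf_of_set (h ` A)"
    using assms(1,2,3) by (intro map_pmf_of_set_inj) (auto simp: bij_betw_def)
  also have "h ` A = A" using assms(1) by (simp add: bij_betw_def)
  finally show ?thesis .
qed

definition L000 :: "(nat\<times>nat\<times>nat) list" where "L000 = [(2,2,1),(1,1,2),(0,2,2),(2,1,0),(1,0,1),(0,0,0)]"
definition L001 :: "(nat\<times>nat\<times>nat) list" where "L001 = [(0,2,0),(0,0,2),(2,2,0),(2,1,1),(1,0,2),(1,1,1)]"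
definition L010 :: "(nat\<times>nat\<times>nat) list" where "L010 = [(1,2,1),(0,1,2),(0,1,0),(2,0,1),(1,2,2),(2,0,0)]"
definition L100 :: "(nat\<times>nat\<times>nat) list" where "L100 = [(1,0,0),(0,2,1),(1,1,0),(2,2,2),(0,0,1),(2,1,2)]"
definition L111 :: "(nat\<times>nat\<times>nat) list" where "L111 = [(1,2,0),(0,1,1),(2,0,2),(1,2,0),(2,0,2),(0,1,1)]"

definition S2 :: "triple set" where
  "S2 = {tri False False False, tri False False True, tri False True False, tri True False False, tri True True True}"

definition psi0 :: "triple \<Rightarrow> nat \<Rightarrow> nat\<times>nat\<times>nat" where
  "psi0 x r = (if x = tri False False False then L000 ! r
     else if x = tri False False True then L001 ! r
     else if x = tri False True False then L010 ! r
     else if x = tri True False False then L100 ! r else L111 ! r)"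

definition dec :: "nat \<Rightarrow> nat\<times>nat \<Rightarrow> bool" where
  "dec i v = (case v of (p,q) \<Rightarrow> if i = 0 then (p+q) mod 3 = 1 else if i = 1 then (q + 2*p) mod 3 = 2 else (p+q) mod 3 = 2)"

lemma lessThan6: "{..<6::nat} = {0,1,2,3,4,5}" by auto

lemma tri_eq[simp]: "tri a b c = tri a' b' c' \<longleftrightarrow> a = a' \<and> b = b' \<and> c = c'"
  by (simp add: tri_def)

lemma bij6: assumes "set l = {..<6::nat}" "length l = 6" shows "bij_betw (\<lambda>r. l ! r) {..<6} {..<6}"
proof -
  have "distinct l" using assms by (metis card_distinct card_lessThan distinct_card length_remdups_card_conv set_remdups)
  hence "inj_on (\<lambda>r. l ! r) {..<6}" using assms(2) by (simp add: inj_on_def nth_eq_iff_index_eq)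
  moreover have "(\<lambda>r. l ! r) ` {..<6} = {..<6}" using assms by (metis atLeast_upt image_set map_nth)
  ultimately show ?thesis by (simp add: bij_betw_def)
qed

lemma pm: assumes "set l = {..<6::nat}" "length l = 6" "\<forall>r\<in>{0,1,2,3,4,5}. f r = g (l ! r)"
  shows "map_pmf f (pmf_of_set {..<6}) = map_pmf g (pmf_of_set {..<6})"
  by (rule perm_map[OF bij6[OF assms(1,2)]]) (use assms(3) in \<open>auto simp: lessThan6\<close>)

lemma pe0: "map_pmf (\<lambda>r. view 0 (psi0 (tri False False True) r)) (pmf_of_set {..<6}) = map_pmf (\<lambda>r. view 0 (psi0 (tri False False False) r)) (pmf_of_set {..<6})"
  by (rule pm[where l="[5, 2, 3, 0, 1, 4]"]) (auto simp: psi0_def L000_def L001_def L010_def L100_def L111_def lessThan6)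

lemma pe1: "map_pmf (\<lambda>r. view 0 (psi0 (tri False True False) r)) (pmf_of_set {..<6}) = map_pmf (\<lambda>r. view 0 (psi0 (tri False False False) r)) (pmf_of_set {..<6})"
  by (rule pm[where l="[4, 2, 5, 0, 1, 3]"]) (auto simp: psi0_def L000_def L001_def L010_def L100_def L111_def lessThan6)

lemma pe2: "map_pmf (\<lambda>r. view 0 (psi0 (tri True True True) r)) (pmf_of_set {..<6}) = map_pmf (\<lambda>r. view 0 (psi0 (tri True False False) r)) (pmf_of_set {..<6})"
  by (rule pm[where l="[0, 1, 3, 2, 5, 4]"]) (auto simp: psi0_def L000_def L001_def L010_def L100_def L111_def lessThan6)

lemma pe3: "map_pmf (\<lambda>r. view (Suc 0) (psi0 (tri False False True) r)) (pmf_of_set {..<6}) = map_pmf (\<lambda>r. view (Suc 0) (psi0 (tri False False False) r)) (pmf_of_set {..<6})"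
  by (rule pm[where l="[2, 5, 0, 3, 4, 1]"]) (auto simp: psi0_def L000_def L001_def L010_def L100_def L111_def lessThan6)

lemma pe4: "map_pmf (\<lambda>r. view (Suc 0) (psi0 (tri True False False) r)) (pmf_of_set {..<6}) = map_pmf (\<lambda>r. view (Suc 0) (psi0 (tri False False False) r)) (pmf_of_set {..<6})"
  by (rule pm[where l="[4, 2, 1, 0, 5, 3]"]) (auto simp: psi0_def L000_def L001_def L010_def L100_def L111_def lessThan6)

lemma pe5: "map_pmf (\<lambda>r. view (Suc 0) (psi0 (tri True True True) r)) (pmf_of_set {..<6}) = map_pmf (\<lambda>r. view (Suc 0) (psi0 (tri False True False) r)) (pmf_of_set {..<6})"
  by (rule pm[where l="[0, 1, 3, 4, 5, 2]"]) (auto simp: psi0_def L000_def L001_def L010_def L100_def L111_def lessThan6)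

lemma pe6: "map_pmf (\<lambda>r. view 2 (psi0 (tri False True False) r)) (pmf_of_set {..<6}) = map_pmf (\<lambda>r. view 2 (psi0 (tri False False False) r)) (pmf_of_set {..<6})"
  by (rule pm[where l="[0, 1, 3, 4, 2, 5]"]) (auto simp: psi0_def L000_def L001_def L010_def L100_def L111_def lessThan6)

lemma pe7: "map_pmf (\<lambda>r. view 2 (psi0 (tri True False False) r)) (pmf_of_set {..<6}) = map_pmf (\<lambda>r. view 2 (psi0 (tri False False False) r)) (pmf_of_set {..<6})"
  by (rule pm[where l="[5, 0, 3, 2, 4, 1]"]) (auto simp: psi0_def L000_def L001_def L010_def L100_def L111_def lessThan6)

lemma pe8: "map_pmf (\<lambda>r. view 2 (psi0 (tri True True True) r)) (pmf_of_set {..<6}) = map_pmf (\<lambda>r. view 2 (psi0 (tri False False True) r)) (pmf_of_set {..<6})"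
  by (rule pm[where l="[0, 3, 1, 2, 4, 5]"]) (auto simp: psi0_def L000_def L001_def L010_def L100_def L111_def lessThan6)

lemma corr6: "\<forall>i\<in>{0,1,2::nat}. \<forall>x\<in>S2. \<forall>r\<in>{0::nat,1,2,3,4,5}. dec i (view i (psi0 x r)) = coord x i"
  by (simp add: S2_def psi0_def L000_def L001_def L010_def L100_def L111_def dec_def)

lemma three: "(i::nat) < 3 \<longleftrightarrow> i \<in> {0,1,2}" by auto

lemma scheme6: "is_3SS S2 6 (pmf_of_set {..<6}) psi0"
proof -
  let ?P = "pmf_of_set {..<6::nat}"
  have sp: "set_pmf ?P = {0,1,2,3,4,5}" by (simp add: lessThan6)
  define rep where "rep i b = (if b then (if i = 0 then tri True False False else if i = (1::nat) then tri False True False else tri False False True) else tri False False False)" for i b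
  have can: "map_pmf (\<lambda>r. view i (psi0 x r)) ?P = map_pmf (\<lambda>r. view i (psi0 (rep i (coord x i)) r)) ?P" if "i \<in> {0,1,2}" "x \<in> S2" for i x
    using that unfolding S2_def rep_def
    by (auto simp: pe0 pe1 pe2 pe3 pe4 pe5 pe6 pe7 pe8)
  show ?thesis unfolding is_3SS_def
    apply (intro conjI)
    subgoal by (simp add: lessThan6)
    subgoal unfolding sp three
    proof (intro allI impI)
      fix i :: nat assume "i \<in> {0,1,2}"
      then show "\<exists>phi. \<forall>x\<in>S2. \<forall>r\<in>{0,1,2,3,4,5}. phi (view i (psi0 x r)) = coord x i"
        using corr6 by (intro exI[of _ "dec i"]) auto
    qed
    subgoal unfolding three
    proof (intro allI impI ballI)
      fix i :: nat and x x' assume "i \<in> {0,1,2}" "x \<in> S2" "x' \<in> S2" "coord x i = coord x' i"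
      then show "map_pmf (\<lambda>r. view i (psi0 x r)) ?P = map_pmf (\<lambda>r. view i (psi0 x' r)) ?P"
        using can[of i x] can[of i x'] by simp
    qed
    done
qed



lemma v0: "(a,c) \<in> view 0 ` T \<longleftrightarrow> (\<exists>b. (a,b,c) \<in> T)"
  by (force simp: view_def image_iff split: prod.splits)
lemma v1: "(b,a) \<in> view 1 ` T \<longleftrightarrow> (\<exists>c. (a,b,c) \<in> T)"
  by (force simp: view_def image_iff split: prod.splits)
lemma v2: "(c,b) \<in> view 2 ` T \<longleftrightarrow> (\<exists>a. (a,b,c) \<in> T)"
  by (force simp: view_def image_iff split: prod.splits)

lemma sch_priv:
  assumes "is_3SS S n P psi" "x \<in> S" "x' \<in> S" "i < 3" "coord x i = coord x' i"
  shows "view i ` psi x ` set_pmf P = view i ` psi x' ` set_pmf P"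
proof -
  have "map_pmf (\<lambda>r. view i (psi x r)) P = map_pmf (\<lambda>r. view i (psi x' r)) P"
    using assms unfolding is_3SS_def by blast
  then have "set_pmf (map_pmf (\<lambda>r. view i (psi x r)) P) = set_pmf (map_pmf (\<lambda>r. view i (psi x' r)) P)"
    by simp
  then show ?thesis by (simp add: image_image)
qed

lemma sch_corr:
  assumes "is_3SS S n P psi" "x \<in> S" "x' \<in> S" "i < 3" "coord x i \<noteq> coord x' i"
  shows "view i ` psi x ` set_pmf P \<inter> view i ` psi x' ` set_pmf P = {}"
proof -
  obtain phi where phi: "\<forall>x\<in>S. \<forall>r\<in>set_pmf P. phi (view i (psi x r)) = coord x i"
    using assms unfolding is_3SS_def by blast
  show ?thesis
  proof (rule ccontr)
    assume "view i ` psi x ` set_pmf P \<inter> view i ` psi x' ` set_pmf P \<noteq> {}"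
    then obtain r r' where "r \<in> set_pmf P" "r' \<in> set_pmf P" "view i (psi x r) = view i (psi x' r')"
      unfolding image_image by blast
    then show False using phi assms(2,3,5) by metis
  qed
qed

lemma sch_card:
  assumes "is_3SS S n P psi"
  shows "card (psi x ` set_pmf P) \<le> n" "finite (psi x ` set_pmf P)" "psi x ` set_pmf P \<noteq> {}"
proof -
  have sub: "set_pmf P \<subseteq> {..<n}" using assms unfolding is_3SS_def by blast
  then have f: "finite (set_pmf P)" using finite_subset by blast
  have "card (psi x ` set_pmf P) \<le> card (set_pmf P)" using f by (rule card_image_le)
  also have "\<dots> \<le> card {..<n}" using sub by (intro card_mono) auto
  finally show "card (psi x ` set_pmf P) \<le> n" by simp
  show "finite (psi x ` set_pmf P)" using f by simp
  show "psi x ` set_pmf P \<noteq> {}" by (simp add: set_pmf_not_empty)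
qed

lemma six:
  fixes T :: "(nat \<times> nat \<times> nat) set"
  assumes "finite T" "(a1,b1,c1) \<in> T" "(a2,b2,c2) \<in> T" "(a3,b3,c3) \<in> T" "a1 \<noteq> a2" "a1 \<noteq> a3" "a2 \<noteq> a3"
    and part: "\<forall>a b c. (a,b,c) \<in> T \<longrightarrow> (\<exists>b' c'. (a,b',c') \<in> T \<and> b' \<noteq> b)"
  shows "6 \<le> card T"
proof -
  obtain d1 e1 where 1: "(a1,d1,e1) \<in> T" "d1 \<noteq> b1" using part assms(2) by blast
  obtain d2 e2 where 2: "(a2,d2,e2) \<in> T" "d2 \<noteq> b2" using part assms(3) by blast
  obtain d3 e3 where 3: "(a3,d3,e3) \<in> T" "d3 \<noteq> b3" using part assms(4) by blast
  let ?U = "{(a1,b1,c1),(a1,d1,e1),(a2,b2,c2),(a2,d2,e2),(a3,b3,c3),(a3,d3,e3)}"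
  have "card ?U = 6" using 1 2 3 assms(5,6,7) by simp
  moreover have "?U \<subseteq> T" using 1 2 3 assms(2,3,4) by simp
  ultimately show ?thesis using card_mono[OF assms(1)] by metis
qed

lemma partner:
  fixes TO T3 :: "(nat \<times> nat \<times> nat) set"
  assumes "view 0 ` TO = view 0 ` T3" "view 1 ` TO = view 1 ` T3" "view 2 ` TO \<inter> view 2 ` T3 = {}"
  shows "\<forall>a b c. (a,b,c) \<in> TO \<longrightarrow> (\<exists>b' c'. (a,b',c') \<in> TO \<and> b' \<noteq> b)"
proof (intro allI impI)
  fix a b c assume t: "(a,b,c) \<in> TO"
  then have "(a,c) \<in> view 0 ` T3" using assms(1) v0 by metis
  then obtain b1 where b1: "(a,b1,c) \<in> T3" using v0 by metis
  then have "(b1,a) \<in> view 1 ` TO" using assms(2) v1 by metis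
  then obtain c' where c': "(a,b1,c') \<in> TO" using v1 by metis
  have "b1 \<noteq> b"
  proof
    assume "b1 = b"
    then have "(c,b) \<in> view 2 ` TO \<inter> view 2 ` T3" using t b1 v2 by blast
    then show False using assms(3) by blast
  qed
  then show "\<exists>b' c'. (a,b',c') \<in> TO \<and> b' \<noteq> b" using c' by blast
qed




definition S1 :: "triple set" where
  "S1 = {tri False False False, tri False False True, tri False True False, tri True False False}"
definition S3 :: "triple set" where
  "S3 = {tri False False False, tri False False True, tri False True False, tri True True True}"

lemma m0: "(a,b,c) \<in> X \<Longrightarrow> (a,c) \<in> view 0 ` X" using v0 by blast
lemma m1: "(a,b,c) \<in> X \<Longrightarrow> (b,a) \<in> view 1 ` X" using v1 by blast
lemma m2: "(a,b,c) \<in> X \<Longrightarrow> (c,b) \<in> view 2 ` X" using v2 by blast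
lemma g0: "(a,c) \<in> view 0 ` X \<Longrightarrow> \<exists>b. (a,b,c) \<in> X" using v0 by blast
lemma g1: "(b,a) \<in> view 1 ` X \<Longrightarrow> \<exists>c. (a,b,c) \<in> X" using v1 by blast
lemma g2: "(c,b) \<in> view 2 ` X \<Longrightarrow> \<exists>a. (a,b,c) \<in> X" using v2 by blast
lemma dj: "X \<inter> Y = {} \<Longrightarrow> u \<in> X \<Longrightarrow> u \<in> Y \<Longrightarrow> False" by blast

lemma lb1:
  assumes sch: "is_3SS S1 n P psi"
  shows "6 \<le> n"
proof -
  define T where "T x = psi x ` set_pmf P" for x
  let ?O = "tri False False False" and ?e3 = "tri False False True" and ?e2 = "tri False True False"
    and ?e1 = "tri True False False"
  have inS: "?O \<in> S1" "?e1 \<in> S1" "?e2 \<in> S1" "?e3 \<in> S1" by (simp_all add: S1_def)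
  note pr = sch_priv[OF sch, folded T_def] and co = sch_corr[OF sch, folded T_def]
  have a1: "view 2 ` T ?O = view 2 ` T ?e1" by (rule pr) (simp_all add: inS)
  have a2: "view 0 ` T ?O \<inter> view 0 ` T ?e1 = {}" by (rule co) (simp_all add: inS)
  have a3: "view 1 ` T ?O = view 1 ` T ?e1" by (rule pr) (simp_all add: inS)
  have b1: "view 2 ` T ?O = view 2 ` T ?e2" by (rule pr) (simp_all add: inS)
  have b2: "view 1 ` T ?O \<inter> view 1 ` T ?e2 = {}" by (rule co) (simp_all add: inS)
  have b3: "view 0 ` T ?O = view 0 ` T ?e2" by (rule pr) (simp_all add: inS)
  have c1: "view 0 ` T ?O = view 0 ` T ?e3" by (rule pr) (simp_all add: inS)
  have c2: "view 1 ` T ?O = view 1 ` T ?e3" by (rule pr) (simp_all add: inS)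
  have c3: "view 2 ` T ?O \<inter> view 2 ` T ?e3 = {}" by (rule co) (simp_all add: inS)
  have fin: "finite (T ?O)" "card (T ?O) \<le> n" "T ?O \<noteq> {}" using sch_card[OF sch] unfolding T_def by auto
  obtain a b c where t: "(a,b,c) \<in> T ?O" using fin(3) by auto
  have "(c,b) \<in> view 2 ` T ?e1" using m2[OF t] a1 by simp
  then obtain x1 where x1: "(x1,b,c) \<in> T ?e1" using g2 by blast
  have nx1: "(x1,b',c) \<notin> T ?O" for b'
  proof
    assume "(x1,b',c) \<in> T ?O"
    from dj[OF a2 m0[OF this] m0[OF x1]] show False .
  qed
  have "(b,x1) \<in> view 1 ` T ?O" using m1[OF x1] a3 by simp
  then obtain cu where u: "(x1,b,cu) \<in> T ?O" using g1 by blast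
  have "(c,b) \<in> view 2 ` T ?e2" using m2[OF t] b1 by simp
  then obtain x2 where x2: "(x2,b,c) \<in> T ?e2" using g2 by blast
  have nx2: "(x2,b,c') \<notin> T ?O" for c'
  proof
    assume "(x2,b,c') \<in> T ?O"
    from dj[OF b2 m1[OF this] m1[OF x2]] show False .
  qed
  have "(x2,c) \<in> view 0 ` T ?O" using m0[OF x2] b3 by simp
  then obtain bv where v: "(x2,bv,c) \<in> T ?O" using g0 by blast
  have d1: "a \<noteq> x1" using nx1 t by blast
  have d2: "a \<noteq> x2" using nx2 t by blast
  have d3: "x1 \<noteq> x2" using nx1 v by blast
  have "6 \<le> card (T ?O)"
    by (rule six[OF fin(1) t u v d1 d2 d3 partner[OF c1 c2 c3]])
  then show ?thesis using fin(2) by linarith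
qed

lemma lb3:
  assumes sch: "is_3SS S3 n P psi"
  shows "6 \<le> n"
proof -
  define T where "T x = psi x ` set_pmf P" for x
  let ?O = "tri False False False" and ?e3 = "tri False False True" and ?e2 = "tri False True False"
    and ?f = "tri True True True"
  have inS: "?O \<in> S3" "?f \<in> S3" "?e2 \<in> S3" "?e3 \<in> S3" by (simp_all add: S3_def)
  note pr = sch_priv[OF sch, folded T_def] and co = sch_corr[OF sch, folded T_def]
  have f1: "view 1 ` T ?f = view 1 ` T ?e2" by (rule pr) (simp_all add: inS)
  have f2: "view 0 ` T ?e2 = view 0 ` T ?O" by (rule pr) (simp_all add: inS)
  have f3: "view 2 ` T ?f = view 2 ` T ?e3" by (rule pr) (simp_all add: inS)
  have f4: "view 0 ` T ?e3 = view 0 ` T ?O" by (rule pr) (simp_all add: inS)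
  have f5: "view 1 ` T ?e3 = view 1 ` T ?O" by (rule pr) (simp_all add: inS)
  have f6: "view 1 ` T ?f \<inter> view 1 ` T ?O = {}" by (rule co) (simp_all add: inS)
  have f7: "view 2 ` T ?O = view 2 ` T ?e2" by (rule pr) (simp_all add: inS)
  have f8: "view 1 ` T ?e2 \<inter> view 1 ` T ?O = {}" by (rule co) (simp_all add: inS)
  have f9: "view 0 ` T ?f \<inter> view 0 ` T ?O = {}" by (rule co) (simp_all add: inS)
  have c1: "view 0 ` T ?O = view 0 ` T ?e3" by (rule pr) (simp_all add: inS)
  have c2: "view 1 ` T ?O = view 1 ` T ?e3" by (rule pr) (simp_all add: inS)
  have c3: "view 2 ` T ?O \<inter> view 2 ` T ?e3 = {}" by (rule co) (simp_all add: inS)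
  have fin: "finite (T ?O)" "card (T ?O) \<le> n" using sch_card[OF sch] unfolding T_def by auto
  have "T ?f \<noteq> {}" using sch_card[OF sch] unfolding T_def by auto
  then obtain p q r where t: "(p,q,r) \<in> T ?f" by auto
  have "(q,p) \<in> view 1 ` T ?e2" using m1[OF t] f1 by simp
  then obtain r1 where "(p,q,r1) \<in> T ?e2" using g1 by blast
  have "(p,r1) \<in> view 0 ` T ?O" using m0[OF \<open>(p,q,r1) \<in> T ?e2\<close>] f2 by simp
  then obtain b0 where e1: "(p,b0,r1) \<in> T ?O" using g0 by blast
  have "(r,q) \<in> view 2 ` T ?e3" using m2[OF t] f3 by simp
  then obtain p' where p': "(p',q,r) \<in> T ?e3" using g2 by blast
  have "(p',r) \<in> view 0 ` T ?O" using m0[OF p'] f4 by simp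
  then obtain q2 where e2: "(p',q2,r) \<in> T ?O" using g0 by blast
  have h1: "(q,p') \<in> view 1 ` T ?O" using m1[OF p'] f5 by simp
  have d1: "p \<noteq> p'"
  proof
    assume "p = p'"
    from dj[OF f6 m1[OF t]] h1 \<open>p = p'\<close> show False by simp
  qed
  have "(r,q2) \<in> view 2 ` T ?e2" using m2[OF e2] f7 by simp
  then obtain p3 where p3: "(p3,q2,r) \<in> T ?e2" using g2 by blast
  have d2: "p3 \<noteq> p'"
  proof
    assume "p3 = p'"
    from dj[OF f8 m1[OF p3]] m1[OF e2] \<open>p3 = p'\<close> show False by simp
  qed
  have "(p3,r) \<in> view 0 ` T ?O" using m0[OF p3] f2 by simp
  then obtain q4 where e3: "(p3,q4,r) \<in> T ?O" using g0 by blast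
  have d3: "p \<noteq> p3"
  proof
    assume "p = p3"
    from dj[OF f9 m0[OF t]] m0[OF e3] \<open>p = p3\<close> show False by simp
  qed
  have "6 \<le> card (T ?O)"
    by (rule six[OF fin(1) e1 e2 e3 d1 d3 d2[symmetric] partner[OF c1 c2 c3]])
  then show ?thesis using fin(2) by linarith
qed




lemma coord_flip: "i < 3 \<Longrightarrow> j < 3 \<Longrightarrow> coord (flip i x) j = (if j = i then \<not> coord x j else coord x j)"
  by (cases x) (auto simp: flip_def coord_def tri_def less_Suc_eq numeral_eq_Suc)

lemma flip_flip: "i < 3 \<Longrightarrow> flip i (flip i x) = x"
  by (cases x) (auto simp: flip_def coord_def tri_def less_Suc_eq numeral_eq_Suc)

lemma flip_scheme:
  assumes "i < 3" "is_3SS T n P psi"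
  shows "is_3SS (flip i ` T) n P (\<lambda>y r. psi (flip i y) r)"
  unfolding is_3SS_def
proof (intro conjI allI impI ballI)
  show "set_pmf P \<subseteq> {..<n}" using assms(2) unfolding is_3SS_def by blast
next
  fix j :: nat assume j: "j < 3"
  obtain phi where phi: "\<forall>x\<in>T. \<forall>r\<in>set_pmf P. phi (view j (psi x r)) = coord x j"
    using assms(2) j unfolding is_3SS_def by blast
  show "\<exists>phi. \<forall>y\<in>flip i ` T. \<forall>r\<in>set_pmf P. phi (view j (psi (flip i y) r)) = coord y j"
  proof (intro exI[of _ "\<lambda>v. if j = i then \<not> phi v else phi v"] ballI)
    fix y r assume y: "y \<in> flip i ` T" and r: "r \<in> set_pmf P"
    then obtain x where x: "x \<in> T" "y = flip i x" by blast
    then have "flip i y = x" using flip_flip assms(1) by simp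
    moreover have "phi (view j (psi x r)) = coord x j" using phi x r by blast
    ultimately show "(if j = i then \<not> phi (view j (psi (flip i y) r)) else phi (view j (psi (flip i y) r))) = coord y j"
      using x coord_flip[OF assms(1) j] by (cases "j = i") auto
  qed
next
  fix j :: nat and y y' assume j: "j < 3" and y: "y \<in> flip i ` T" and y': "y' \<in> flip i ` T"
    and eq: "coord y j = coord y' j"
  obtain x where x: "x \<in> T" "y = flip i x" using y by blast
  obtain x' where x': "x' \<in> T" "y' = flip i x'" using y' by blast
  have fx: "flip i y = x" "flip i y' = x'" using flip_flip assms(1) x x' by simp_all
  have "coord x j = coord x' j" using eq x x' coord_flip[OF assms(1) j] by (auto split: if_splits)
  then have "map_pmf (\<lambda>r. view j (psi x r)) P = map_pmf (\<lambda>r. view j (psi x' r)) P"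
    using assms(2) j x(1) x'(1) unfolding is_3SS_def by blast
  then show "map_pmf (\<lambda>r. view j (psi (flip i y) r)) P = map_pmf (\<lambda>r. view j (psi (flip i y') r)) P"
    using fx by simp
qed

definition valid :: "(nat \<Rightarrow> nat) \<Rightarrow> bool" where
  "valid \<sigma> \<longleftrightarrow> \<sigma> 0 < 3 \<and> \<sigma> 1 < 3 \<and> \<sigma> 2 < 3 \<and> \<sigma> 0 \<noteq> \<sigma> 1 \<and> \<sigma> 0 \<noteq> \<sigma> 2 \<and> \<sigma> 1 \<noteq> \<sigma> 2"

lemma sig_cases:
  assumes "valid \<sigma>"
  shows "(\<sigma> 0 = 0 \<and> \<sigma> 1 = 1 \<and> \<sigma> 2 = 2) \<or> (\<sigma> 0 = 0 \<and> \<sigma> 1 = 2 \<and> \<sigma> 2 = 1) \<or>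
         (\<sigma> 0 = 1 \<and> \<sigma> 1 = 0 \<and> \<sigma> 2 = 2) \<or> (\<sigma> 0 = 1 \<and> \<sigma> 1 = 2 \<and> \<sigma> 2 = 0) \<or>
         (\<sigma> 0 = 2 \<and> \<sigma> 1 = 0 \<and> \<sigma> 2 = 1) \<or> (\<sigma> 0 = 2 \<and> \<sigma> 1 = 1 \<and> \<sigma> 2 = 0)"
proof -
  have "\<sigma> 0 = 0 \<or> \<sigma> 0 = 1 \<or> \<sigma> 0 = 2" "\<sigma> 1 = 0 \<or> \<sigma> 1 = 1 \<or> \<sigma> 1 = 2"
       "\<sigma> 2 = 0 \<or> \<sigma> 2 = 1 \<or> \<sigma> 2 = 2" using assms unfolding valid_def by auto
  moreover have "\<sigma> 0 \<noteq> \<sigma> 1" "\<sigma> 0 \<noteq> \<sigma> 2" "\<sigma> 1 \<noteq> \<sigma> 2" using assms unfolding valid_def by auto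
  ultimately show ?thesis by (elim disjE) simp_all
qed

definition edge :: "nat \<Rightarrow> nat \<Rightarrow> nat \<times> nat \<times> nat \<Rightarrow> nat" where
  "edge p q w = (if p + q = 1 then fst w else if p + q = 3 then fst (snd w) else snd (snd w))"

definition resh :: "(nat \<Rightarrow> nat) \<Rightarrow> nat \<times> nat \<times> nat \<Rightarrow> nat \<times> nat \<times> nat" where
  "resh \<sigma> w = (edge (\<sigma> 0) (\<sigma> 1) w, edge (\<sigma> 1) (\<sigma> 2) w, edge (\<sigma> 2) (\<sigma> 0) w)"

definition gfun :: "(nat \<Rightarrow> nat) \<Rightarrow> nat \<times> nat \<Rightarrow> nat \<times> nat" where
  "gfun \<sigma> = (if \<sigma> 1 = (\<sigma> 0 + 1) mod 3 then id else prod.swap)"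

definition tau :: "(nat \<Rightarrow> nat) \<Rightarrow> nat \<Rightarrow> nat" where
  "tau \<sigma> j = (if \<sigma> 0 = j then 0 else if \<sigma> 1 = j then 1 else 2)"

lemma three_cases: "(j::nat) < 3 \<Longrightarrow> j = 0 \<or> j = 1 \<or> j = 2" by auto

lemma resh_view:
  assumes "valid \<sigma>" "j < 3"
  shows "view j (resh \<sigma> w) = gfun \<sigma> (view (\<sigma> j) w)"
proof -
  obtain a b c where w: "w = (a,b,c)" by (cases w)
  from sig_cases[OF assms(1)] three_cases[OF assms(2)] show ?thesis
    unfolding w by (elim disjE) (simp_all add: resh_def edge_def gfun_def view_def)
qed

lemma gfun_gfun: "gfun \<sigma> (gfun \<sigma> v) = v"
  by (cases v) (simp add: gfun_def)

lemma coord_permute: "j < 3 \<Longrightarrow> coord (permute \<sigma> x) j = coord x (\<sigma> j)"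
  using three_cases[of j] by (auto simp: permute_def coord_def tri_def)

lemma valid_tau: "valid \<sigma> \<Longrightarrow> valid (tau \<sigma>)"
  using sig_cases[of \<sigma>] by (auto simp: valid_def tau_def)

lemma permute_tau: "valid \<sigma> \<Longrightarrow> permute (tau \<sigma>) (permute \<sigma> x) = x"
proof -
  assume v: "valid \<sigma>"
  obtain a b c where x: "x = (a,b,c)" by (cases x)
  from sig_cases[OF v] show ?thesis
    unfolding x by (elim disjE) (simp_all add: permute_def coord_def tri_def tau_def)
qed

lemma valid_lt: "valid \<sigma> \<Longrightarrow> j < 3 \<Longrightarrow> \<sigma> j < 3"
  using three_cases[of j] by (auto simp: valid_def)




lemma perm_scheme:
  assumes "valid \<sigma>" "is_3SS T n P psi"
  shows "is_3SS (permute \<sigma> ` T) n P (\<lambda>y r. resh \<sigma> (psi (permute (tau \<sigma>) y) r))"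
  unfolding is_3SS_def
proof (intro conjI allI impI ballI)
  show "set_pmf P \<subseteq> {..<n}" using assms(2) unfolding is_3SS_def by blast
next
  fix j :: nat assume j: "j < 3"
  have sj: "\<sigma> j < 3" using valid_lt[OF assms(1) j] .
  obtain phi where phi: "\<forall>x\<in>T. \<forall>r\<in>set_pmf P. phi (view (\<sigma> j) (psi x r)) = coord x (\<sigma> j)"
    using assms(2) sj unfolding is_3SS_def by blast
  show "\<exists>phi. \<forall>y\<in>permute \<sigma> ` T. \<forall>r\<in>set_pmf P. phi (view j (resh \<sigma> (psi (permute (tau \<sigma>) y) r))) = coord y j"
  proof (intro exI[of _ "\<lambda>v. phi (gfun \<sigma> v)"] ballI)
    fix y r assume y: "y \<in> permute \<sigma> ` T" and r: "r \<in> set_pmf P"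
    then obtain x where x: "x \<in> T" "y = permute \<sigma> x" by blast
    then have "permute (tau \<sigma>) y = x" using permute_tau assms(1) by simp
    moreover have "phi (view (\<sigma> j) (psi x r)) = coord x (\<sigma> j)" using phi x r by blast
    ultimately show "phi (gfun \<sigma> (view j (resh \<sigma> (psi (permute (tau \<sigma>) y) r)))) = coord y j"
      using x coord_permute[OF j] resh_view[OF assms(1) j] gfun_gfun by simp
  qed
next
  fix j :: nat and y y' assume j: "j < 3" and y: "y \<in> permute \<sigma> ` T" and y': "y' \<in> permute \<sigma> ` T"
    and eq: "coord y j = coord y' j"
  have sj: "\<sigma> j < 3" using valid_lt[OF assms(1) j] .
  obtain x where x: "x \<in> T" "y = permute \<sigma> x" using y by blast
  obtain x' where x': "x' \<in> T" "y' = permute \<sigma> x'" using y' by blast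
  have fx: "permute (tau \<sigma>) y = x" "permute (tau \<sigma>) y' = x'" using permute_tau assms(1) x x' by simp_all
  have "coord x (\<sigma> j) = coord x' (\<sigma> j)" using eq x x' coord_permute[OF j] by simp
  then have "map_pmf (\<lambda>r. view (\<sigma> j) (psi x r)) P = map_pmf (\<lambda>r. view (\<sigma> j) (psi x' r)) P"
    using assms(2) sj x(1) x'(1) unfolding is_3SS_def by blast
  then have "map_pmf (gfun \<sigma>) (map_pmf (\<lambda>r. view (\<sigma> j) (psi x r)) P) = map_pmf (gfun \<sigma>) (map_pmf (\<lambda>r. view (\<sigma> j) (psi x' r)) P)"
    by simp
  then show "map_pmf (\<lambda>r. view j (resh \<sigma> (psi (permute (tau \<sigma>) y) r))) P = map_pmf (\<lambda>r. view j (resh \<sigma> (psi (permute (tau \<sigma>) y') r))) P"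
    using fx by (simp add: pmf.map_comp o_def resh_view[OF assms(1) j])
qed

lemma bij_valid:
  assumes "bij_betw \<sigma> {0,1,2} {0,1,2::nat}"
  shows "valid \<sigma>"
proof -
  have img: "\<sigma> ` {0,1,2} = {0,1,2}" and inj: "inj_on \<sigma> {0,1,2}"
    using assms by (simp_all add: bij_betw_def)
  have "\<sigma> 0 \<in> {0,1,2}" "\<sigma> 1 \<in> {0,1,2}" "\<sigma> 2 \<in> {0,1,2}" using img by blast+
  then have lt: "\<sigma> 0 < 3" "\<sigma> 1 < 3" "\<sigma> 2 < 3" by auto
  have "\<sigma> 0 \<noteq> \<sigma> 1" using inj_onD[OF inj, of 0 1] by auto
  moreover have "\<sigma> 0 \<noteq> \<sigma> 2" using inj_onD[OF inj, of 0 2] by auto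
  moreover have "\<sigma> 1 \<noteq> \<sigma> 2" using inj_onD[OF inj, of 1 2] by auto
  ultimately show ?thesis using lt by (simp add: valid_def)
qed

abbreviation sch :: "triple set \<Rightarrow> nat \<Rightarrow> bool" where
  "sch S n \<equiv> \<exists>P psi. is_3SS S n P psi"

lemma equiv_sch: "coord_equiv S0 S \<Longrightarrow> sch S0 n = sch S n"
proof (induction rule: coord_equiv.induct)
  case (refl S) then show ?case by simp
next
  case (neg S T i)
  have A: "sch T n \<Longrightarrow> sch (flip i ` T) n"
  proof -
    assume "sch T n"
    then obtain P psi where "is_3SS T n P psi" by blast
    from flip_scheme[OF neg(2) this] show ?thesis by blast
  qed
  have B: "sch (flip i ` T) n \<Longrightarrow> sch T n"
  proof -
    assume "sch (flip i ` T) n"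
    then obtain P psi where "is_3SS (flip i ` T) n P psi" by blast
    from flip_scheme[OF neg(2) this] have "sch (flip i ` flip i ` T) n" by blast
    moreover have "flip i ` flip i ` T = T" using flip_flip[OF neg(2)] by (simp add: image_image)
    ultimately show ?thesis by simp
  qed
  have "sch T n = sch (flip i ` T) n" using A B by (rule iffI)
  with neg(3) show ?case by (rule trans)
next
  case (perm S T \<sigma>)
  have v: "valid \<sigma>" using bij_valid[OF perm(2)] .
  have A: "sch T n \<Longrightarrow> sch (permute \<sigma> ` T) n"
  proof -
    assume "sch T n"
    then obtain P psi where "is_3SS T n P psi" by blast
    from perm_scheme[OF v this] show ?thesis by blast
  qed
  have B: "sch (permute \<sigma> ` T) n \<Longrightarrow> sch T n"
  proof -
    assume "sch (permute \<sigma> ` T) n"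
    then obtain P psi where "is_3SS (permute \<sigma> ` T) n P psi" by blast
    from perm_scheme[OF valid_tau[OF v] this] have "sch (permute (tau \<sigma>) ` permute \<sigma> ` T) n" by blast
    moreover have "permute (tau \<sigma>) ` permute \<sigma> ` T = T" using permute_tau[OF v] by (simp add: image_image)
    ultimately show ?thesis by simp
  qed
  have "sch T n = sch (permute \<sigma> ` T) n" using A B by (rule iffI)
  with perm(3) show ?case by (rule trans)
qed




lemma sch_mono:
  assumes "is_3SS S n P psi" "S' \<subseteq> S"
  shows "is_3SS S' n P psi"
proof -
  have a: "set_pmf P \<subseteq> {..<n}" and
    b: "\<forall>i<3. \<exists>phi. \<forall>x\<in>S. \<forall>r\<in>set_pmf P. phi (view i (psi x r)) = coord x i" and
    c: "\<forall>i<3. \<forall>x\<in>S. \<forall>x'\<in>S. coord x i = coord x' i \<longrightarrow>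
        map_pmf (\<lambda>r. view i (psi x r)) P = map_pmf (\<lambda>r. view i (psi x' r)) P"
    using assms(1) unfolding is_3SS_def by blast+
  have b': "\<forall>i<3. \<exists>phi. \<forall>x\<in>S'. \<forall>r\<in>set_pmf P. phi (view i (psi x r)) = coord x i"
  proof (intro allI impI)
    fix i :: nat assume "i < 3"
    then obtain phi where "\<forall>x\<in>S. \<forall>r\<in>set_pmf P. phi (view i (psi x r)) = coord x i" using b by blast
    then show "\<exists>phi. \<forall>x\<in>S'. \<forall>r\<in>set_pmf P. phi (view i (psi x r)) = coord x i" using assms(2) by blast
  qed
  have c': "\<forall>i<3. \<forall>x\<in>S'. \<forall>x'\<in>S'. coord x i = coord x' i \<longrightarrow>
        map_pmf (\<lambda>r. view i (psi x r)) P = map_pmf (\<lambda>r. view i (psi x' r)) P"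
    using c assms(2) by blast
  show ?thesis unfolding is_3SS_def using a b' c' by blast
qed

lemma S1_sub: "S1 \<subseteq> S2" by (auto simp: S1_def S2_def)
lemma S3_sub: "S3 \<subseteq> S2" by (auto simp: S3_def S2_def)

lemma base_facts:
  assumes "S0 \<in> {S1, S2, S3}"
  shows "sch S0 6" "\<And>m. sch S0 m \<Longrightarrow> 6 \<le> m"
proof -
  have s2: "sch S2 6" using scheme6 by blast
  have s1: "sch S1 6" using sch_mono[OF scheme6 S1_sub] by blast
  have s3: "sch S3 6" using sch_mono[OF scheme6 S3_sub] by blast
  show "sch S0 6" using assms s1 s2 s3 by blast
  fix m assume "sch S0 m"
  then obtain P psi where h: "is_3SS S0 m P psi" by blast
  show "6 \<le> m"
  proof -
    have "S0 = S1 \<or> S0 = S2 \<or> S0 = S3" using assms by blast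
    then show ?thesis
    proof (elim disjE)
      assume "S0 = S1" then show ?thesis using lb1 h by simp
    next
      assume "S0 = S2" then show ?thesis using lb1[OF sch_mono[OF _ S1_sub]] h by simp
    next
      assume "S0 = S3" then show ?thesis using lb3 h by simp
    qed
  qed
qed

theorem mainTheorem9:
  assumes "S0 \<in> {{tri False False False, tri False False True, tri False True False, tri True False False},
                  {tri False False False, tri False False True, tri False True False, tri True False False, tri True True True},
                  {tri False False False, tri False False True, tri False True False, tri True True True}}"
    and "coord_equiv S0 S"
  shows "rho S = log 2 6"
proof -
  have S0: "S0 \<in> {S1, S2, S3}" using assms(1) unfolding S1_def S2_def S3_def .
  have L: "(LEAST n. sch S0 n) = 6"
    by (rule Least_equality) (use base_facts[OF S0] in auto)
  have "(\<lambda>n. sch S n) = (\<lambda>n. sch S0 n)" using equiv_sch[OF assms(2)] by simp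
  then have "(LEAST n. sch S n) = 6" using L by simp
  then show ?thesis unfolding rho_def by simp
qed


end
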